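(* Let $k\ge2$ and $n\ge3$. Every monomial occurring in $\mathcal{F}_{n,k}(x)$ has exponent at least $r_{n,k}$, and the coefficient of $x^{r_{n,k}}$ equals $\binom{q_{n,k}+r_{n,k}}{q_{n,k}}$. In other words, the lowest-degree term of $\mathcal{F}_{n,k}(x)$ is $\binom{q_{n,k}+r_{n,k}}{r_{n,k}}x^{r_{n,k}}$.
   Context: For $k\ge2$, the polynomials $\mathcal{F}_{n,k}(x)\in\mathbb{Z}[x]$ ($n\in\mathbb{Z}$) are defined by $\mathcal{F}_{1,k}=1$, $\mathcal{F}_{n,k}=0$ for $n=0,-1,\dots,-(k-2)$, and $\mathcal{F}_{n,k}(x)=\sum_{j=1}^{k}x^{k-j}\mathcal{F}_{n-j,k}(x)$ for all $n\in\mathbb{Z}$. This recurrence is used upwards for $n\ge2$, and downwards for $n\le-(k-1)$ as $\mathcal{F}_{n,k}=\mathcal{F}_{n+k,k}-\sum_{j=1}^{k-1}x^j\mathcal{F}_{n+j,k}$. For $n>0$, set $q_{n,k}=\lfloor (n-2)/k\rfloor$ and let $r_{n,k}\in\{0,\dots,k-1\}$ be the residue of $(k-1)(n-1)$ modulo $k$. Then $n-1=k(q_{n,k}+1)-r_{n,k}$. *)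

theory Defs
  imports "HOL-Computational_Algebra.Polynomial"
begin

text \<open>The polynomials F_{n,k}(x) for n \<ge> 0. Since F_{n,k} = 0 for n = 0,-1,...,-(k-2),
  the upward recurrence F_n = \<Sum>_{j=1..k} x^(k-j) F_{n-j} (n \<ge> 2) only involves
  nonzero terms with n - j \<ge> 1; terms with n - j \<le> 0 vanish.\<close>

function fibpoly :: "nat \<Rightarrow> nat \<Rightarrow> int poly" where
  "fibpoly k n = (if n = 0 then 0 else if n = 1 then 1 else
     (\<Sum>j\<in>{1..k}. if j < n then monom 1 (k - j) * fibpoly k (n - j) else 0))"
  by pat_completeness auto
termination by (relation "measure (\<lambda>(k, n). n)") auto

definition q_nk :: "nat \<Rightarrow> nat \<Rightarrow> nat" where
  "q_nk n k = (n - 2) div k"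

definition r_nk :: "nat \<Rightarrow> nat \<Rightarrow> nat" where
  "r_nk n k = ((k - 1) * (n - 1)) mod k"

end

theory Submission
  imports Defs
begin

lemma coeff_rec:
  assumes "n \<ge> 2"
  shows "coeff (fibpoly k n) d =
    (\<Sum>j\<in>{1..k}. if j < n \<and> k - j \<le> d then coeff (fibpoly k (n - j)) (d - (k - j)) else 0)"
  using assms by (subst fibpoly.simps) (auto simp: coeff_sum coeff_monom_mult intro!: sum.cong)

lemma main_lemma:
  assumes "k \<ge> 2" "r < k" "n = k * (q + 1) - r + 1" "d \<le> r"
  shows "coeff (fibpoly k n) d = (if d = r then int ((q + r) choose r) else 0)"
  using assms
proof (induction q arbitrary: n r d)
  case 0
  have n2: "n \<ge> 2" using 0 by simp
  have "coeff (fibpoly k n) d =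
    (\<Sum>j\<in>{1..k}. if j < n \<and> k - j \<le> d then coeff (fibpoly k (n - j)) (d - (k - j)) else 0)"
    by (rule coeff_rec[OF n2])
  also have "\<dots> = (\<Sum>j\<in>{1..k}. if j = k - r \<and> d = r then 1 else 0)"
  proof (rule sum.cong[OF refl])
    fix j assume j: "j \<in> {1..k}"
    show "(if j < n \<and> k - j \<le> d then coeff (fibpoly k (n - j)) (d - (k - j)) else 0) =
      (if j = k - r \<and> d = r then 1 else 0)"
    proof (cases "j < n \<and> k - j \<le> d")
      case True
      then have "j = k - r" "d = r" using 0 j by auto
      then show ?thesis using 0 True by (simp add: coeff_1)
    next
      case False
      then show ?thesis using 0 j by auto
    qed
  qed
  also have "\<dots> = (if d = r then 1 else 0)"
  proof -
    have "k - r \<in> {1..k}" using 0 by auto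
    then show ?thesis by (simp add: sum.delta)
  qed
  finally show ?case by simp
next
  case (Suc q)
  have n2: "n \<ge> 2" using Suc.prems by simp
  have "coeff (fibpoly k n) d =
    (\<Sum>j\<in>{1..k}. if j < n \<and> k - j \<le> d then coeff (fibpoly k (n - j)) (d - (k - j)) else 0)"
    by (rule coeff_rec[OF n2])
  also have "\<dots> = (\<Sum>j\<in>{1..k}. if k - r \<le> j \<and> d = r then int ((q + (j - (k - r))) choose (j - (k - r))) else 0)"
  proof (rule sum.cong[OF refl])
    fix j assume j: "j \<in> {1..k}"
    show "(if j < n \<and> k - j \<le> d then coeff (fibpoly k (n - j)) (d - (k - j)) else 0) =
      (if k - r \<le> j \<and> d = r then int ((q + (j - (k - r))) choose (j - (k - r))) else 0)"
    proof (cases "k - j \<le> d")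
      case True
      define t where "t = j - (k - r)"
      have "n \<ge> k + 1" using Suc.prems by simp
      then have jn: "j < n" using j by simp
      have tk: "t < k" using Suc.prems True j unfolding t_def by auto
      have nj: "n - j = k * (q + 1) - t + 1" using Suc.prems True j unfolding t_def
        by (auto simp: algebra_simps)
      have dt: "d - (k - j) \<le> t" using Suc.prems True j unfolding t_def by auto
      have eq: "(d - (k - j) = t) = (d = r)" using Suc.prems True j unfolding t_def by auto
      have "coeff (fibpoly k (n - j)) (d - (k - j)) = (if d - (k - j) = t then int ((q + t) choose t) else 0)"
        by (rule Suc.IH[OF Suc.prems(1) tk nj dt])
      moreover have "k - r \<le> j" using True Suc.prems by simp
      ultimately show ?thesis using True jn eq unfolding t_def by (auto simp del: fibpoly.simps)
    next
      case False
      then show ?thesis using Suc.prems by auto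
    qed
  qed
  finally have c: "coeff (fibpoly k n) d = (\<Sum>j\<in>{1..k}. if k - r \<le> j \<and> d = r then int ((q + (j - (k - r))) choose (j - (k - r))) else 0)" .
  show ?case
  proof (cases "d = r")
    case False
    then show ?thesis using c by simp
  next
    case True
    have "(\<Sum>j\<in>{1..k}. if k - r \<le> j \<and> d = r then int ((q + (j - (k - r))) choose (j - (k - r))) else 0)
        = (\<Sum>j\<in>{k - r..k}. int ((q + (j - (k - r))) choose (j - (k - r))))"
      using True Suc.prems by (intro sum.mono_neutral_cong_right) auto
    also have "\<dots> = (\<Sum>t\<in>{0..r}. int ((q + t) choose t))"
    proof -
      have "{k - r..k} = {0 + (k - r)..r + (k - r)}" using Suc.prems by auto
      then show ?thesis by (simp only: sum.shift_bounds_cl_nat_ivl) simp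
    qed
    also have "\<dots> = int (\<Sum>t\<le>r. (q + t) choose t)"
      by (simp add: atMost_atLeast0)
    also have "\<dots> = int ((Suc q + r) choose r)"
      by (simp add: sum_choose_lower)
    finally show ?thesis using c True by simp
  qed
qed

theorem mainTheorem3:
  fixes n k :: nat
  assumes "k \<ge> 2" and "n \<ge> 3"
  shows "(\<forall>i < r_nk n k. coeff (fibpoly k n) i = 0) \<and>
         coeff (fibpoly k n) (r_nk n k) = int ((q_nk n k + r_nk n k) choose (q_nk n k))"
proof -
  define q where "q = (n - 2) div k"
  define s where "s = (n - 2) mod k"
  have k0: "k > 0" using assms by simp
  have sk: "s < k" unfolding s_def using k0 by simp
  have m: "n - 2 = k * q + s" unfolding q_def s_def by simp
  obtain u where u: "k = Suc (s + u)" using sk by (metis less_imp_Suc_add)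
  have e: "(k - 1) * (n - 1) = k * ((k - 1) * q + s) + (k - 1 - s)"
  proof -
    have "n - 1 = k * q + s + 1" using m assms by simp
    then show ?thesis using u by (simp add: algebra_simps)
  qed
  have rk0: "k - 1 - s < k" using k0 by simp
  have r: "r_nk n k = k - 1 - s"
    unfolding r_nk_def e using rk0 by (metis add.commute mod_less mod_mult_self2 mult.commute)
  have qq: "q_nk n k = q" unfolding q_nk_def q_def by simp
  have rk: "k - 1 - s < k" using k0 by simp
  have nn: "n = k * (q + 1) - (k - 1 - s) + 1" using m sk assms by (simp add: algebra_simps)
  have A: "\<forall>i < r_nk n k. coeff (fibpoly k n) i = 0"
    using main_lemma[OF assms(1) rk nn] r by auto
  have B: "coeff (fibpoly k n) (r_nk n k) = int ((q + r_nk n k) choose r_nk n k)"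
    using main_lemma[OF assms(1) rk nn] r by auto
  show ?thesis using A B qq binomial_symmetric[of "r_nk n k" "q + r_nk n k"] by simp
qed

end
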